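(* For all $n\ge1$, $a_{\{0112,0120\}}(n)=2^{n-1}+\binom{n+1}{4}$.
   Context: An ascent in an integer sequence $s_1\cdots s_m$ is an index $j$ with $s_j<s_{j+1}$; $\mathrm{asc}$ denotes the number of ascents. An ascent sequence is a sequence $x_1\cdots x_n$ of nonnegative integers with $x_1=0$ and $x_i\le 1+\mathrm{asc}(x_1\cdots x_{i-1})$ for all $i\ge2$. The reduction $\mathrm{red}(w)$ of an integer sequence $w$ replaces the $i$-th smallest distinct letter of $w$ by $i-1$; a pattern is a reduced sequence. A sequence $x$ contains a pattern $p=p_1\cdots p_k$ if there are indices $i_1<\cdots<i_k$ with $\mathrm{red}(x_{i_1}\cdots x_{i_k})=p$; otherwise $x$ avoids $p$. For a finite set $P$ of patterns, $a_P(n)$ denotes the number of ascent sequences of length $n$ avoiding every pattern in $P$. *)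

theory Defs
  imports Main
begin

definition asc :: "nat list \<Rightarrow> nat" where
  "asc s = card {j. Suc j < length s \<and> s ! j < s ! Suc j}"

text \<open>Ascent sequences: x_1 = 0 and x_i \<le> 1 + asc(x_1 ... x_{i-1}) for i \<ge> 2
  (0-indexed here: index i \<ge> 1, prefix take i).\<close>
definition ascent_seq :: "nat list \<Rightarrow> bool" where
  "ascent_seq x \<longleftrightarrow> x \<noteq> [] \<and> x ! 0 = 0 \<and>
     (\<forall>i. 1 \<le> i \<and> i < length x \<longrightarrow> x ! i \<le> 1 + asc (take i x))"

definition red :: "nat list \<Rightarrow> nat list" where
  "red w = map (\<lambda>a. card {b \<in> set w. b < a}) w"

definition contains :: "nat list \<Rightarrow> nat list \<Rightarrow> bool" where
  "contains x p \<longleftrightarrow> (\<exists>is. length is = length p \<and> sorted_wrt (<) is \<and>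
      (\<forall>i\<in>set is. i < length x) \<and> red (map (\<lambda>i. x ! i) is) = p)"

definition avoids :: "nat list \<Rightarrow> nat list \<Rightarrow> bool" where
  "avoids x p \<longleftrightarrow> \<not> contains x p"

definition a_P :: "nat list set \<Rightarrow> nat \<Rightarrow> nat" where
  "a_P P n = card {x. length x = n \<and> ascent_seq x \<and> (\<forall>p\<in>P. avoids x p)}"

end

theory Submission
  imports Defs
begin

lemma red_lt_iff:
  fixes w :: "nat list"
  assumes "u \<in> set w" "v \<in> set w"
  shows "card {b\<in>set w. b<u} < card {b\<in>set w. b<v} \<longleftrightarrow> u < v"
proof
  assume "u < v"
  hence sub: "{b\<in>set w. b<u} \<subseteq> {b\<in>set w. b<v}" by auto
  have m1: "u \<in> {b\<in>set w. b<v}" using assms(1) \<open>u < v\<close> by simp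
  have m2: "u \<notin> {b\<in>set w. b<u}" by simp
  have "{b\<in>set w. b<u} \<subset> {b\<in>set w. b<v}" using sub m1 m2 by blast
  thus "card {b\<in>set w. b<u} < card {b\<in>set w. b<v}" by (simp add: psubset_card_mono)
next
  assume h: "card {b\<in>set w. b<u} < card {b\<in>set w. b<v}"
  show "u < v"
  proof (rule ccontr)
    assume "\<not> u < v"
    hence "{b\<in>set w. b<v} \<subseteq> {b\<in>set w. b<u}" by auto
    hence "card {b\<in>set w. b<v} \<le> card {b\<in>set w. b<u}" by (simp add: card_mono)
    thus False using h by simp
  qed
qed

lemma len4: assumes "length xs = 4" obtains i j k l where "xs = [i,j,k,l]"
proof -
  obtain i r where 1: "xs = i # r" "length r = 3" using assms by (cases xs) auto
  obtain j r2 where 2: "r = j # r2" "length r2 = 2" using 1 by (cases r) auto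
  obtain k r3 where 3: "r2 = k # r3" "length r3 = 1" using 2 by (cases r2) auto
  obtain l where 4: "r3 = [l]" using 3 by (cases r3) auto
  show ?thesis using that 1 2 3 4 by blast
qed

lemma red_0112: "(A::nat) < B \<Longrightarrow> B < D \<Longrightarrow> red [A,B,B,D] = [0,1,1,2]"
proof -
  assume h: "A < B" "B < D"
  have "{b\<in>set [A,B,B,D]. b<A} = {}" using h by auto
  moreover have "{b\<in>set [A,B,B,D]. b<B} = {A}" using h by auto
  moreover have "{b\<in>set [A,B,B,D]. b<D} = {A,B}" using h by auto
  ultimately show ?thesis using h by (simp add: red_def)
qed

lemma red_0120: "(A::nat) < B \<Longrightarrow> B < C \<Longrightarrow> red [A,B,C,A] = [0,1,2,0]"
proof -
  assume h: "A < B" "B < C"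
  have "{b\<in>set [A,B,C,A]. b<A} = {}" using h by auto
  moreover have "{b\<in>set [A,B,C,A]. b<B} = {A}" using h by auto
  moreover have "{b\<in>set [A,B,C,A]. b<C} = {A,B}" using h by auto
  ultimately show ?thesis using h by (simp add: red_def)
qed

lemma red4:
  assumes "red [A,B,C,D] = [p0,p1,p2,p3]"
  shows "(p0 < p1 \<longleftrightarrow> A < B) \<and> (p1 < p2 \<longleftrightarrow> B < C) \<and> (p2 < p3 \<longleftrightarrow> C < D)
    \<and> (p0 < p3 \<longleftrightarrow> A < D) \<and> (p3 < p0 \<longleftrightarrow> D < A)
    \<and> (p1 < p0 \<longleftrightarrow> B < A) \<and> (p2 < p1 \<longleftrightarrow> C < B)"
proof -
  let ?w = "[A,B,C,D]"
  have e: "p0 = card {b\<in>set ?w. b<A}" "p1 = card {b\<in>set ?w. b<B}"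
    "p2 = card {b\<in>set ?w. b<C}" "p3 = card {b\<in>set ?w. b<D}"
    using assms by (simp_all add: red_def)
  show ?thesis unfolding e by (intro conjI red_lt_iff) auto
qed

lemma contains_0112: "contains x [0,1,1,2] \<longleftrightarrow>
  (\<exists>i j k l. i<j \<and> j<k \<and> k<l \<and> l<length x \<and> x!i<x!j \<and> x!j=x!k \<and> x!k<x!l)"
proof
  assume "contains x [0,1,1,2]"
  then obtain "is" where h: "length is = length [0::nat,1,1,2]" "sorted_wrt (<) is" "\<forall>i\<in>set is. i < length x"
    "red (map (\<lambda>i. x ! i) is) = [0,1,1,2]" unfolding contains_def by blast
  have "length is = 4" using h(1) by simp
  then obtain i j k l where e: "is = [i,j,k,l]" using len4 by blast
  have r: "red [x!i,x!j,x!k,x!l] = [0,1,1,2]" using h(4) e by simp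
  from red4[OF r] have "x!i<x!j" "x!k<x!l" "\<not> x!j < x!k" "\<not> x!k < x!j" by auto
  hence "x!i<x!j \<and> x!j=x!k \<and> x!k<x!l" by auto
  moreover have "i<j \<and> j<k \<and> k<l \<and> l<length x" using h(2,3) e by auto
  ultimately show "\<exists>i j k l. i<j \<and> j<k \<and> k<l \<and> l<length x \<and> x!i<x!j \<and> x!j=x!k \<and> x!k<x!l"
    by blast
next
  assume "\<exists>i j k l. i<j \<and> j<k \<and> k<l \<and> l<length x \<and> x!i<x!j \<and> x!j=x!k \<and> x!k<x!l"
  then obtain i j k l where h: "i<j" "j<k" "k<l" "l<length x" "x!i<x!j" "x!j=x!k" "x!k<x!l" by blast
  have "red (map (\<lambda>i. x ! i) [i,j,k,l]) = [0,1,1,2]" using red_0112[of "x!i" "x!j" "x!l"] h by simp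
  thus "contains x [0,1,1,2]" unfolding contains_def using h
    by (intro exI[of _ "[i,j,k,l]"]) auto
qed

lemma contains_0120: "contains x [0,1,2,0] \<longleftrightarrow>
  (\<exists>i j k l. i<j \<and> j<k \<and> k<l \<and> l<length x \<and> x!i<x!j \<and> x!j<x!k \<and> x!l=x!i)"
proof
  assume "contains x [0,1,2,0]"
  then obtain "is" where h: "length is = length [0::nat,1,2,0]" "sorted_wrt (<) is" "\<forall>i\<in>set is. i < length x"
    "red (map (\<lambda>i. x ! i) is) = [0,1,2,0]" unfolding contains_def by blast
  have "length is = 4" using h(1) by simp
  then obtain i j k l where e: "is = [i,j,k,l]" using len4 by blast
  have r: "red [x!i,x!j,x!k,x!l] = [0,1,2,0]" using h(4) e by simp
  from red4[OF r] have "x!i<x!j" "x!j<x!k" "\<not> x!i < x!l" "\<not> x!l < x!i" by auto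
  hence "x!i<x!j \<and> x!j<x!k \<and> x!l=x!i" by auto
  moreover have "i<j \<and> j<k \<and> k<l \<and> l<length x" using h(2,3) e by auto
  ultimately show "\<exists>i j k l. i<j \<and> j<k \<and> k<l \<and> l<length x \<and> x!i<x!j \<and> x!j<x!k \<and> x!l=x!i"
    by blast
next
  assume "\<exists>i j k l. i<j \<and> j<k \<and> k<l \<and> l<length x \<and> x!i<x!j \<and> x!j<x!k \<and> x!l=x!i"
  then obtain i j k l where h: "i<j" "j<k" "k<l" "l<length x" "x!i<x!j" "x!j<x!k" "x!l=x!i" by blast
  have "red (map (\<lambda>i. x ! i) [i,j,k,l]) = [0,1,2,0]" using red_0120[of "x!i" "x!j" "x!k"] h by simp
  thus "contains x [0,1,2,0]" unfolding contains_def using h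
    by (intro exI[of _ "[i,j,k,l]"]) auto
qed

lemma asc_take: "i \<le> length x \<Longrightarrow> asc (take i x) = card {j. Suc j < i \<and> x!j < x!Suc j}"
  unfolding asc_def by (rule arg_cong[where f=card]) auto


definition hf :: "nat \<Rightarrow> nat \<Rightarrow> nat \<Rightarrow> nat \<Rightarrow> nat \<Rightarrow> nat" where
 "hf a b c p i = (if i < a then 0 else if i = a then 1 else if i \<le> a+b then 0
    else if i < a+b+c then i+1-(a+b) else if i < a+b+c+p then c else c-1)"

lemma hf_no0112:
  assumes "1 \<le> a" "2 \<le> c" "i<j" "j<k" "k<l"
    "hf a b c p i < hf a b c p j" "hf a b c p j = hf a b c p k" "hf a b c p k < hf a b c p l"
  shows False
  using assms unfolding hf_def by (auto split: if_splits)

lemma hf_no0120: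
  assumes "1 \<le> a" "2 \<le> c" "i<j" "j<k" "k<l"
    "hf a b c p i < hf a b c p j" "hf a b c p j < hf a b c p k" "hf a b c p l = hf a b c p i"
  shows False
  using assms unfolding hf_def by (auto split: if_splits)

lemma hf_asc:
  assumes "1 \<le> a" "2 \<le> c" "1 \<le> i"
  shows "hf a b c p i \<le> 1 + card {j. Suc j < i \<and> hf a b c p j < hf a b c p (Suc j)}"
proof (cases "hf a b c p i \<le> 1")
  case True thus ?thesis by simp
next
  case False
  let ?h = "hf a b c p"
  have ib: "a+b < i" using False unfolding hf_def by (auto split: if_splits)
  define m where "m = min i (a+b+c)"
  let ?K = "insert (a-1) {a+b..<m-1}"
  have sub: "?K \<subseteq> {j. Suc j < i \<and> ?h j < ?h (Suc j)}"
  proof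
    fix j assume "j \<in> ?K"
    thus "j \<in> {j. Suc j < i \<and> ?h j < ?h (Suc j)}"
      using assms ib unfolding m_def hf_def by (auto split: if_splits)
  qed
  have fin: "finite {j. Suc j < i \<and> ?h j < ?h (Suc j)}" by (rule finite_subset[of _ "{..<i}"]) auto
  have cK: "card ?K = 1 + (m - 1 - (a+b))" using assms ib unfolding m_def by simp
  have "?h i \<le> 1 + card ?K" using assms ib False unfolding cK m_def hf_def by (auto split: if_splits)
  also have "card ?K \<le> card {j. Suc j < i \<and> ?h j < ?h (Suc j)}" using card_mono[OF fin sub] .
  finally show ?thesis by simp
qed


lemma ascent_seq_iff: "ascent_seq x \<longleftrightarrow> x \<noteq> [] \<and> x!0 = 0 \<and>
   (\<forall>i. 1 \<le> i \<and> i < length x \<longrightarrow> x!i \<le> 1 + card {j. Suc j < i \<and> x!j < x!Suc j})"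
proof -
  have e: "\<And>i. i < length x \<Longrightarrow> asc (take i x) = card {j. Suc j < i \<and> x!j < x!Suc j}"
    using asc_take by simp
  show ?thesis unfolding ascent_seq_def using e by auto
qed

lemma charact:
  assumes asq: "ascent_seq x" and A1: "\<not> contains x [0,1,1,2]" and A2: "\<not> contains x [0,1,2,0]"
    and nb: "\<not> set x \<subseteq> {0,1}"
  shows "\<exists>a b c p. 1\<le>a \<and> 2\<le>c \<and> a+b+c+p \<le> length x \<and> x = map (hf a b c p) [0..<length x]"
proof -
  define n where "n = length x"
  have Q1: False if "i<j" "j<k" "k<l" "l<n" "x!i<x!j" "x!j=x!k" "x!k<x!l" for i j k l
    using A1 that unfolding contains_0112 n_def by blast
  have Q2: False if "i<j" "j<k" "k<l" "l<n" "x!i<x!j" "x!j<x!k" "x!l=x!i" for i j k l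
    using A2 that unfolding contains_0120 n_def by blast
  have x0: "x!0 = 0" and AS: "\<And>i. 1\<le>i \<Longrightarrow> i<n \<Longrightarrow> x!i \<le> 1 + card {j. Suc j < i \<and> x!j < x!Suc j}"
    using asq unfolding ascent_seq_iff n_def by auto
  obtain i0 where i0: "i0 < n" "2 \<le> x!i0"
  proof -
    obtain v where "v \<in> set x" "v \<notin> {0,1}" using nb by blast
    then obtain i where "i < n" "x!i = v" unfolding n_def by (metis in_set_conv_nth)
    thus ?thesis using that \<open>v \<notin> {0,1}\<close> by auto
  qed
  define k where "k = (LEAST i. i<n \<and> 2 \<le> x!i)"
  have k: "k<n" "2 \<le> x!k" using LeastI[of "\<lambda>i. i<n \<and> 2 \<le> x!i" i0] i0 unfolding k_def by auto
  have below: "x!i \<le> 1" if "i<k" for i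
    using not_less_Least[of i "\<lambda>i. i<n \<and> 2 \<le> x!i"] that k(1) unfolding k_def[symmetric] by auto
  have k1: "1 \<le> k" using k x0 by (cases k) auto
  have fin: "finite {j. Suc j < i \<and> x!j < x!Suc j}" for i
    by (rule finite_subset[of _ "{..<i}"]) auto
  have "{j. Suc j < k \<and> x!j < x!Suc j} \<noteq> {}"
  proof
    assume "{j. Suc j < k \<and> x!j < x!Suc j} = {}"
    with AS[OF k1 k(1)] k(2) show False by simp
  qed
  then obtain j where j: "Suc j < k" "x!j < x!Suc j" by blast
  define m where "m = Suc j"
  have m: "1 \<le> m" "m < k" "x!m = 1" using j below[of m] unfolding m_def by auto
  have zeros: "x!i = 0" if "i<k" "i \<noteq> m" for i
  proof (rule ccontr)
    assume nz: "x!i \<noteq> 0"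
    hence xi: "x!i = 1" using below[OF that(1)] by simp
    have "i \<noteq> 0" using x0 nz by (cases i) auto
    show False
    proof (cases "i < m")
      case True thus False using Q1[of 0 i m k] xi m k x0 \<open>i\<noteq>0\<close> by auto
    next
      case False thus False using Q1[of 0 m i k] xi m k x0 that by auto
    qed
  qed
  have "{j. Suc j < k \<and> x!j < x!Suc j} \<subseteq> {m-1}"
  proof
    fix j assume "j \<in> {j. Suc j < k \<and> x!j < x!Suc j}"
    hence "Suc j < k" "x!Suc j \<noteq> 0" by auto
    hence "Suc j = m" using zeros[of "Suc j"] by auto
    thus "j \<in> {m-1}" by auto
  qed
  hence "card {j. Suc j < k \<and> x!j < x!Suc j} \<le> card {m-1}"
    by (intro card_mono) auto
  hence "card {j. Suc j < k \<and> x!j < x!Suc j} \<le> 1" by simp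
  hence xk: "x!k = 2" using AS[OF k1 k(1)] k(2) by simp
  have pos: "1 \<le> x!i" if "k<i" "i<n" for i
  proof (rule ccontr)
    assume "\<not> 1 \<le> x!i"
    thus False using Q2[of 0 m k i] m xk x0 that by auto
  qed
  define s where "s = (LEAST i. k < i \<and> (i = n \<or> x!i \<noteq> i+2-k))"
  have sP: "k < s \<and> (s = n \<or> x!s \<noteq> s+2-k)"
    using LeastI[of "\<lambda>i. k < i \<and> (i = n \<or> x!i \<noteq> i+2-k)" n] k(1) unfolding s_def by auto
  have sn: "s \<le> n" using Least_le[of "\<lambda>i. k < i \<and> (i = n \<or> x!i \<noteq> i+2-k)" n] k(1) unfolding s_def by auto
  have chain: "x!i = i+2-k" if "k \<le> i" "i < s" for i
  proof (cases "i = k")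
    case True thus ?thesis using xk by simp
  next
    case False
    thus ?thesis using not_less_Least[of i "\<lambda>i. k < i \<and> (i = n \<or> x!i \<noteq> i+2-k)"] that sn
      unfolding s_def[symmetric] by auto
  qed
  define c where "c = s+1-k"
  have c2: "2 \<le> c" using sP unfolding c_def by auto
  define ps where "ps v = (if v = 1 then m else k+v-2)" for v
  have posv: "ps v < s \<and> x!(ps v) = v \<and> 1 \<le> ps v" if "1 \<le> v" "v \<le> c" for v
  proof (cases "v = 1")
    case True thus ?thesis using m sP unfolding ps_def by auto
  next
    case False
    hence "k \<le> k+v-2" "k+v-2 < s" using that sP unfolding c_def by auto
    thus ?thesis using chain[of "k+v-2"] False that k1 unfolding ps_def by auto
  qed
  have pc: "ps c < s" "x!(ps c) = c" "1 \<le> ps c" using posv[of c] c2 by auto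
  have pc1: "ps (c-1) < s" "x!(ps (c-1)) = c-1" "1 \<le> ps (c-1)" using posv[of "c-1"] c2 by auto
  have psmono: "ps v < ps w" if "1 \<le> v" "v < w" for v w
    using that m unfolding ps_def by auto
  have ge: "c-1 \<le> x!i" if "s \<le> i" "i < n" for i
  proof (rule ccontr)
    assume a: "\<not> c-1 \<le> x!i"
    define v where "v = x!i"
    have v1: "1 \<le> v" using pos[of i] that sP unfolding v_def by auto
    have "v+1 < c" using a unfolding v_def by auto
    thus False using Q2[of "ps v" "ps (v+1)" "ps c" i] posv[of v] posv[of "v+1"] posv[of c] 
       psmono[of v "v+1"] psmono[of "v+1" c] v1 c2 that unfolding v_def by auto
  qed
  have asc_s: "x!s \<le> c" if "s < n"
  proof -
    have sub: "{j. Suc j < s \<and> x!j < x!Suc j} \<subseteq> insert (m-1) {k-1..<s-1}"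
    proof
      fix j assume "j \<in> {j. Suc j < s \<and> x!j < x!Suc j}"
      hence h: "Suc j < s" "x!Suc j \<noteq> 0" by auto
      show "j \<in> insert (m-1) {k-1..<s-1}"
      proof (cases "Suc j < k")
        case True hence "Suc j = m" using zeros[of "Suc j"] h by auto
        thus ?thesis by auto
      next
        case False thus ?thesis using h by auto
      qed
    qed
    have "card {j. Suc j < s \<and> x!j < x!Suc j} \<le> card (insert (m-1) {k-1..<s-1})"
      by (rule card_mono[OF _ sub]) auto
    also have "\<dots> \<le> Suc (card {k-1..<s-1})" by (rule card_insert_le_m1) auto
    also have "\<dots> = c" unfolding c_def using sP k1 Suc_diff_le[of k s] by simp
    finally have "x!s \<le> 1 + c" using AS[of s] sP that by auto
    moreover have "x!s \<noteq> s+2-k" using sP that by auto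
    ultimately show ?thesis unfolding c_def using sP by auto
  qed
  have le: "x!i \<le> c" if "s \<le> i" "i < n" for i
  proof (cases "i = s")
    case True thus ?thesis using asc_s that by auto
  next
    case False
    hence si: "s < i" using that by auto
    show ?thesis
    proof (rule ccontr)
      assume big: "\<not> x!i \<le> c"
      have xs: "x!s = c \<or> x!s = c-1" using ge[of s] asc_s si that by auto
      show False
      proof (cases "x!s = c")
        case True thus False using Q1[of 0 "ps c" s i] pc c2 big si that x0 by auto
      next
        case False
        hence "x!s = c-1" using xs by auto
        moreover have "c-1 < x!i" using big by simp
        ultimately show False using Q1[of 0 "ps (c-1)" s i] pc1 c2 big si that x0 by auto
      qed
    qed
  qed
  have nodec: "x!j \<noteq> c" if "s \<le> i" "i < j" "j < n" "x!i = c-1" for i j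
  proof
    assume "x!j = c"
    thus False using Q1[of 0 "ps (c-1)" i j] pc1 c2 that x0 by auto
  qed
  define r where "r = (LEAST i. s \<le> i \<and> (i = n \<or> x!i = c-1))"
  have rP: "s \<le> r \<and> (r = n \<or> x!r = c-1)"
    using LeastI[of "\<lambda>i. s \<le> i \<and> (i = n \<or> x!i = c-1)" n] sn unfolding r_def by auto
  have rn: "r \<le> n" using Least_le[of "\<lambda>i. s \<le> i \<and> (i = n \<or> x!i = c-1)" n] sn unfolding r_def by auto
  have midc: "x!i = c" if "s \<le> i" "i < r" for i
  proof -
    have "x!i \<noteq> c-1" using not_less_Least[of i "\<lambda>i. s \<le> i \<and> (i = n \<or> x!i = c-1)"] that
      unfolding r_def[symmetric] by auto
    thus ?thesis using ge[of i] le[of i] that rn by auto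
  qed
  have tail: "x!i = c-1" if "r \<le> i" "i < n" for i
  proof (cases "i = r")
    case True thus ?thesis using rP that by auto
  next
    case False
    have xr: "x!r = c-1" using rP that by auto
    have "x!i \<noteq> c" using nodec[of r i] xr False that rP by auto
    thus ?thesis using ge[of i] le[of i] that rP by auto
  qed
  have eq: "x!i = hf m (k-m-1) c (r-s) i" if "i<n" for i
  proof -
    consider "i < m" | "i = m" | "m < i" "i < k" | "k \<le> i" "i < s" | "s \<le> i" "i < r" | "r \<le> i"
      by linarith
    thus ?thesis
    proof cases
      case 1 thus ?thesis using zeros[of i] m unfolding hf_def by auto
    next
      case 2 thus ?thesis using m unfolding hf_def by auto
    next
      case 3 thus ?thesis using zeros[of i] m unfolding hf_def by auto
    next
      case 4 thus ?thesis using chain[of i] m sP unfolding hf_def c_def by auto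
    next
      case 5 thus ?thesis using midc[of i] m sP unfolding hf_def c_def by auto
    next
      case 6 thus ?thesis using tail[of i] that rP m sP unfolding hf_def c_def by auto
    qed
  qed
  have sum: "m + (k-m-1) + c + (r-s) = r" using m sP rP unfolding c_def by auto
  show ?thesis
  proof (intro exI conjI)
    show "1 \<le> m" by (rule m(1))
    show "2 \<le> c" by (rule c2)
    show "m + (k-m-1) + c + (r-s) \<le> length x" using sum rn unfolding n_def by simp
    show "x = map (hf m (k-m-1) c (r-s)) [0..<length x]"
      by (rule nth_equalityI) (use eq in \<open>auto simp: n_def\<close>)
  qed
qed


lemma hs: "(\<Sum>j\<le>m. (j+k) choose k) = (m+k+1) choose (k+1)"
  by (induction m) (simp_all add: add.commute)

lemma hs2: "(\<Sum>a\<le>m. (m-a+k) choose k) = (m+k+1) choose (k+1)"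
proof -
  have "(\<Sum>a\<le>m. (m-a+k) choose k) = (\<Sum>a<Suc m. (\<lambda>j. (j+k) choose k) (Suc m - Suc a))"
    by (simp add: lessThan_Suc_atMost)
  also have "\<dots> = (\<Sum>j<Suc m. (j+k) choose k)" by (rule sum.nat_diff_reindex)
  also have "\<dots> = (m+k+1) choose (k+1)" using hs by (simp add: lessThan_Suc_atMost)
  finally show ?thesis .
qed

lemma cnt1: "card {p::nat. p \<le> m} = (m+1) choose 1"
  by simp

lemma fin2: "finite {(c::nat,p::nat). c+p \<le> k}"
  by (rule finite_subset[of _ "{..k}\<times>{..k}"]) auto

lemma fin3: "finite {(b::nat,c::nat,p::nat). b+c+p \<le> k}"
  by (rule finite_subset[of _ "{..k}\<times>{..k}\<times>{..k}"]) auto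

lemma cnt2: "card {(c::nat,p::nat). c+p \<le> m} = (m+2) choose 2"
proof -
  have "{(c::nat,p::nat). c+p \<le> m} = (SIGMA c:{..m}. {p. p \<le> m-c})" by auto
  hence "card {(c::nat,p::nat). c+p \<le> m} = (\<Sum>c\<le>m. card {p::nat. p \<le> m-c})" by simp
  also have "\<dots> = (\<Sum>c\<le>m. (m-c+1) choose 1)" using cnt1 by simp
  also have "\<dots> = (m+1+1) choose (1+1)" by (rule hs2)
  also have "\<dots> = (m+2) choose 2" by (rule arg_cong2[where f="(choose)"]) simp_all
  finally show ?thesis .
qed

lemma cnt3: "card {(b::nat,c::nat,p::nat). b+c+p \<le> m} = (m+3) choose 3"
proof -
  have "{(b::nat,c::nat,p::nat). b+c+p \<le> m} = (SIGMA b:{..m}. {(c,p). c+p \<le> m-b})" by auto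
  hence "card {(b::nat,c::nat,p::nat). b+c+p \<le> m} = (\<Sum>b\<le>m. card {(c::nat,p::nat). c+p \<le> m-b})"
    using fin2 by simp
  also have "\<dots> = (\<Sum>b\<le>m. (m-b+2) choose 2)" using cnt2 by simp
  also have "\<dots> = (m+2+1) choose (2+1)" by (rule hs2)
  also have "\<dots> = (m+3) choose 3" by (rule arg_cong2[where f="(choose)"]) simp_all
  finally show ?thesis .
qed

lemma cnt4: "card {(a::nat,b::nat,c::nat,p::nat). a+b+c+p \<le> m} = (m+4) choose 4"
proof -
  have "{(a::nat,b::nat,c::nat,p::nat). a+b+c+p \<le> m} = (SIGMA a:{..m}. {(b,c,p). b+c+p \<le> m-a})" by auto
  hence "card {(a::nat,b::nat,c::nat,p::nat). a+b+c+p \<le> m} = (\<Sum>a\<le>m. card {(b::nat,c::nat,p::nat). b+c+p \<le> m-a})"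
    using fin3 by simp
  also have "\<dots> = (\<Sum>a\<le>m. (m-a+3) choose 3)" using cnt3 by simp
  also have "\<dots> = (m+3+1) choose (3+1)" by (rule hs2)
  also have "\<dots> = (m+4) choose 4" by (rule arg_cong2[where f="(choose)"]) simp_all
  finally show ?thesis .
qed


definition TT :: "nat \<Rightarrow> (nat\<times>nat\<times>nat\<times>nat) set" where
  "TT n = {(a,b,c,p). 1\<le>a \<and> 2\<le>c \<and> a+b+c+p \<le> n}"

lemma cardT: "card (TT n) = (n+1) choose 4"
proof (cases "n < 3")
  case True
  hence "TT n = {}" unfolding TT_def by auto
  thus ?thesis using True by simp
next
  case False
  let ?f = "\<lambda>(a::nat,b::nat,c::nat,p::nat). (a+1,b,c+2,p)"
  have e: "TT n = ?f ` {(a::nat,b::nat,c::nat,p::nat). a+b+c+p \<le> n-3}"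
  proof
    show "TT n \<subseteq> ?f ` {(a::nat,b::nat,c::nat,p::nat). a+b+c+p \<le> n-3}"
    proof
      fix t assume "t \<in> TT n"
      then obtain a b c p where t: "t = (a,b,c,p)" "1\<le>a" "2\<le>c" "a+b+c+p \<le> n" unfolding TT_def by auto
      show "t \<in> ?f ` {(a::nat,b::nat,c::nat,p::nat). a+b+c+p \<le> n-3}"
        by (rule image_eqI[where x="(a-1,b,c-2,p)"]) (use t in auto)
    qed
  next
    show "?f ` {(a::nat,b::nat,c::nat,p::nat). a+b+c+p \<le> n-3} \<subseteq> TT n"
      using False unfolding TT_def by auto
  qed
  have "inj ?f" unfolding inj_def by auto
  hence "card (TT n) = card {(a::nat,b::nat,c::nat,p::nat). a+b+c+p \<le> n-3}"
    unfolding e by (simp add: card_image inj_on_subset)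
  also have "\<dots> = (n-3+4) choose 4" by (rule cnt4)
  also have "n-3+4 = n+1" using False by simp
  finally show ?thesis .
qed

lemma hf_inj:
  assumes "1\<le>a" "2\<le>c" "a+b+c+p \<le> n" "1\<le>a'" "2\<le>c'" "a'+b'+c'+p' \<le> n"
    and eq: "\<And>i. i<n \<Longrightarrow> hf a b c p i = hf a' b' c' p' i"
  shows "a=a' \<and> b=b' \<and> c=c' \<and> p=p'"
proof -
  have A: "a = a'"
  proof (rule ccontr)
    assume "a \<noteq> a'"
    hence "a < a' \<or> a' < a" by auto
    thus False
    proof
      assume "a < a'" thus False using eq[of a] assms(1-6) unfolding hf_def by auto
    next
      assume "a' < a" thus False using eq[of a'] assms(1-6) unfolding hf_def by auto
    qed
  qed
  have B: "b = b'"
  proof (rule ccontr)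
    assume "b \<noteq> b'"
    hence "b < b' \<or> b' < b" by auto
    thus False
    proof
      assume "b < b'" thus False using eq[of "a+b+1"] assms(1-6) A unfolding hf_def by (auto split: if_splits)
    next
      assume "b' < b" thus False using eq[of "a+b'+1"] assms(1-6) A unfolding hf_def by (auto split: if_splits)
    qed
  qed
  have C: "c = c'"
  proof (rule ccontr)
    assume "c \<noteq> c'"
    hence "c < c' \<or> c' < c" by auto
    thus False
    proof
      assume "c < c'" thus False using eq[of "a+b+c"] assms(1-6) A B unfolding hf_def by (auto split: if_splits)
    next
      assume "c' < c" thus False using eq[of "a+b+c'"] assms(1-6) A B unfolding hf_def by (auto split: if_splits)
    qed
  qed
  have P: "p = p'"
  proof (rule ccontr)
    assume "p \<noteq> p'"
    hence "p < p' \<or> p' < p" by auto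
    thus False
    proof
      assume "p < p'" thus False using eq[of "a+b+c+p"] assms(1-6) A B C unfolding hf_def by (auto split: if_splits)
    next
      assume "p' < p" thus False using eq[of "a+b+c+p'"] assms(1-6) A B C unfolding hf_def by (auto split: if_splits)
    qed
  qed
  show ?thesis using A B C P by simp
qed

lemma F_good:
  assumes "1\<le>a" "2\<le>c" "a+b+c+p \<le> n"
  defines "x \<equiv> map (hf a b c p) [0..<n]"
  shows "ascent_seq x" "\<not> contains x [0,1,1,2]" "\<not> contains x [0,1,2,0]"
proof -
  have nth: "x!i = hf a b c p i" if "i<n" for i using that unfolding x_def by simp
  have len: "length x = n" unfolding x_def by simp
  show "ascent_seq x" unfolding ascent_seq_iff
  proof (intro conjI allI impI)
    show "x \<noteq> []" using assms len by auto
    show "x!0 = 0" using assms nth[of 0] unfolding hf_def by auto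
    fix i assume i: "1 \<le> i \<and> i < length x"
    have "{j. Suc j < i \<and> x!j < x!Suc j} = {j. Suc j < i \<and> hf a b c p j < hf a b c p (Suc j)}"
      using i nth len by auto
    thus "x!i \<le> 1 + card {j. Suc j < i \<and> x!j < x!Suc j}"
      using hf_asc[of a c i b p] assms i nth len by auto
  qed
  show "\<not> contains x [0,1,1,2]" unfolding contains_0112 len
  proof
    assume "\<exists>i j k l. i<j \<and> j<k \<and> k<l \<and> l<n \<and> x!i<x!j \<and> x!j=x!k \<and> x!k<x!l"
    then obtain i j k l where h: "i<j" "j<k" "k<l" "l<n" "x!i<x!j" "x!j=x!k" "x!k<x!l" by blast
    have "i<n" "j<n" "k<n" using h by auto
    thus False using hf_no0112[of a c i j k l b p] h assms(1,2) nth by simp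
  qed
  show "\<not> contains x [0,1,2,0]" unfolding contains_0120 len
  proof
    assume "\<exists>i j k l. i<j \<and> j<k \<and> k<l \<and> l<n \<and> x!i<x!j \<and> x!j<x!k \<and> x!l=x!i"
    then obtain i j k l where h: "i<j" "j<k" "k<l" "l<n" "x!i<x!j" "x!j<x!k" "x!l=x!i" by blast
    have "i<n" "j<n" "k<n" using h by auto
    thus False using hf_no0120[of a c i j k l b p] h assms(1,2) nth by simp
  qed
qed


lemma finTT: "finite (TT n)"
  by (rule finite_subset[of _ "{..n}\<times>{..n}\<times>{..n}\<times>{..n}"]) (auto simp: TT_def)

lemma bin_good:
  assumes "length x = n" "1 \<le> n" "x!0 = 0" "set x \<subseteq> {0,1}"
  shows "ascent_seq x" "\<not> contains x [0,1,1,2]" "\<not> contains x [0,1,2,0]"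
proof -
  have le1: "x!i \<le> 1" if "i < length x" for i using nth_mem[OF that] assms(4) by auto
  show "ascent_seq x" unfolding ascent_seq_iff using assms le1 by fastforce
  show "\<not> contains x [0,1,1,2]" unfolding contains_0112
  proof
    assume "\<exists>i j k l. i<j \<and> j<k \<and> k<l \<and> l<length x \<and> x!i<x!j \<and> x!j=x!k \<and> x!k<x!l"
    then obtain i j k l where h: "i<j" "j<k" "k<l" "l<length x" "x!i<x!j" "x!j=x!k" "x!k<x!l" by blast
    have "x!i \<le> 1" "x!j \<le> 1" "x!l \<le> 1" using h le1 by auto
    thus False using h by auto
  qed
  show "\<not> contains x [0,1,2,0]" unfolding contains_0120
  proof
    assume "\<exists>i j k l. i<j \<and> j<k \<and> k<l \<and> l<length x \<and> x!i<x!j \<and> x!j<x!k \<and> x!l=x!i"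
    then obtain i j k l where h: "i<j" "j<k" "k<l" "l<length x" "x!i<x!j" "x!j<x!k" "x!l=x!i" by blast
    have "x!i \<le> 1" "x!j \<le> 1" "x!k \<le> 1" using h le1 by auto
    thus False using h by auto
  qed
qed

theorem theorem3p6:
  fixes n :: nat
  assumes "n \<ge> 1"
  shows "a_P {[0,1,1,2], [0,1,2,0]} n = 2 ^ (n - 1) + ((n + 1) choose 4)"
proof -
  define S where "S = {x. length x = n \<and> ascent_seq x \<and> (\<forall>p\<in>{[0,1,1,2], [0,1,2,0]}. avoids x p)}"
  define Bn where "Bn = {x. length x = n \<and> x!0 = 0 \<and> set x \<subseteq> {0::nat,1}}"
  define g where "g = (\<lambda>(a,b,c,p). map (hf a b c p) [0..<n])"
  define Gn where "Gn = g ` TT n"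
  have avS: "(\<forall>p\<in>{[0,1,1,2], [0,1,2,0]}. avoids x p) \<longleftrightarrow> \<not> contains x [0,1,1,2] \<and> \<not> contains x [0,1,2,0]" for x
    by (simp add: avoids_def)
  have SU: "S = Bn \<union> Gn"
  proof
    show "S \<subseteq> Bn \<union> Gn"
    proof
      fix x assume "x \<in> S"
      hence x: "length x = n" "ascent_seq x" "\<not> contains x [0,1,1,2]" "\<not> contains x [0,1,2,0]"
        unfolding S_def avS by auto
      show "x \<in> Bn \<union> Gn"
      proof (cases "set x \<subseteq> {0,1}")
        case True
        have "x!0 = 0" using x(2) unfolding ascent_seq_def by auto
        thus ?thesis using True x(1) unfolding Bn_def by auto
      next
        case False
        then obtain a b c p where h: "1\<le>a" "2\<le>c" "a+b+c+p \<le> length x" "x = map (hf a b c p) [0..<length x]"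
          using charact[OF x(2) x(3) x(4)] by blast
        have "x = g (a,b,c,p)" using h x(1) unfolding g_def by simp
        moreover have "(a,b,c,p) \<in> TT n" using h x(1) unfolding TT_def by simp
        ultimately show ?thesis unfolding Gn_def by blast
      qed
    qed
  next
    show "Bn \<union> Gn \<subseteq> S"
    proof
      fix x assume "x \<in> Bn \<union> Gn"
      thus "x \<in> S"
      proof
        assume "x \<in> Bn"
        hence "length x = n" "x!0 = 0" "set x \<subseteq> {0,1}" unfolding Bn_def by auto
        thus "x \<in> S" using bin_good[of x n] assms unfolding S_def avS by auto
      next
        assume "x \<in> Gn"
        then obtain a b c p where h: "(a,b,c,p) \<in> TT n" "x = g (a,b,c,p)" unfolding Gn_def by auto
        hence h2: "1\<le>a" "2\<le>c" "a+b+c+p \<le> n" "x = map (hf a b c p) [0..<n]"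
          unfolding TT_def g_def by auto
        show "x \<in> S" using F_good[OF h2(1-3)] h2(4) unfolding S_def avS by simp
      qed
    qed
  qed
  have disj: "Bn \<inter> Gn = {}"
  proof (rule ccontr)
    assume "Bn \<inter> Gn \<noteq> {}"
    then obtain x where "x \<in> Bn" "x \<in> Gn" by blast
    then obtain a b c p where h: "(a,b,c,p) \<in> TT n" "x = g (a,b,c,p)" "set x \<subseteq> {0,1}"
      unfolding Gn_def Bn_def by auto
    hence h2: "1\<le>a" "2\<le>c" "a+b+c+p \<le> n" "x = map (hf a b c p) [0..<n]"
      unfolding TT_def g_def by auto
    have i: "a+b+1 < n" using h2 by simp
    have "x!(a+b+1) = 2" using h2 i unfolding hf_def by simp
    moreover have "x!(a+b+1) \<in> set x" using i h2(4) by simp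
    ultimately show False using h(3) by auto
  qed
  have finB: "finite Bn"
    by (rule finite_subset[of _ "{xs. set xs \<subseteq> {0,1} \<and> length xs = n}"])
      (auto simp: Bn_def finite_lists_length_eq)
  have finG: "finite Gn" unfolding Gn_def using finTT by simp
  have cardB: "card Bn = 2^(n-1)"
  proof -
    have "Bn = (\<lambda>y. 0 # y) ` {y. set y \<subseteq> {0::nat,1} \<and> length y = n-1}"
    proof
      show "Bn \<subseteq> (\<lambda>y. 0 # y) ` {y. set y \<subseteq> {0::nat,1} \<and> length y = n-1}"
      proof
        fix x assume "x \<in> Bn"
        hence x: "length x = n" "x!0 = 0" "set x \<subseteq> {0,1}" unfolding Bn_def by auto
        then obtain v y where xy: "x = v # y" using assms by (cases x) auto
        hence "v = 0" using x by simp
        thus "x \<in> (\<lambda>y. 0 # y) ` {y. set y \<subseteq> {0::nat,1} \<and> length y = n-1}" using xy x by auto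
      qed
    next
      show "(\<lambda>y. 0 # y) ` {y. set y \<subseteq> {0::nat,1} \<and> length y = n-1} \<subseteq> Bn"
        using assms unfolding Bn_def by auto
    qed
    hence "card Bn = card {y. set y \<subseteq> {0::nat,1} \<and> length y = n-1}"
      by (simp add: card_image)
    also have "\<dots> = 2^(n-1)" by (simp add: card_lists_length_eq numeral_2_eq_2)
    finally show ?thesis .
  qed
  have injg: "inj_on g (TT n)"
  proof (rule inj_onI)
    fix u v assume u: "u \<in> TT n" and v: "v \<in> TT n" and e: "g u = g v"
    obtain a b c p where uu: "u = (a,b,c,p)" by (cases u) auto
    obtain a' b' c' p' where vv: "v = (a',b',c',p')" by (cases v) auto
    have m: "map (hf a b c p) [0..<n] = map (hf a' b' c' p') [0..<n]" using e uu vv unfolding g_def by simp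
    have "\<And>i. i<n \<Longrightarrow> hf a b c p i = hf a' b' c' p' i"
    proof -
      fix i assume "i < n"
      thus "hf a b c p i = hf a' b' c' p' i" using arg_cong[OF m, of "\<lambda>l. l!i"] by simp
    qed
    thus "u = v" using hf_inj[of a c b p n a' c' b' p'] u v uu vv unfolding TT_def by auto
  qed
  have cardG: "card Gn = (n+1) choose 4" unfolding Gn_def using card_image[OF injg] cardT by simp
  have "a_P {[0,1,1,2], [0,1,2,0]} n = card S" unfolding a_P_def S_def by simp
  also have "\<dots> = card Bn + card Gn" unfolding SU using card_Un_disjoint[OF finB finG disj] .
  finally show ?thesis using cardB cardG by simp
qed

end
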